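(* Let $(N,\underline X)\in\aleph^{FGM*}$, with associated symmetric Bernoulli sequence $\{I_j\}_{j\ge0}$ (so that $(I_0,\dots,I_n)$ is the vector associated with $C_n$), and let $K_n=I_1+\dots+I_n$. Then for $t\ge0$, $$\mathcal L_S(t)=\gamma_N(0)+\sum_{n=1}^\infty E\Big[\gamma_{N_{[1+I_0]}}(n)\prod_{j=1}^n\mathcal L_{X_{[1+I_j]}}(t)\Big]$$ $$\qquad=\gamma_N(0)+\sum_{i\in\{0,1\}}\sum_{n=1}^\infty\gamma_{N_{[1+i]}}(n)\sum_{k=0}^n\Pr(I_0=i,K_n=k)\,\mathcal L_{X_{[1]}}(t)^{n-k}\mathcal L_{X_{[2]}}(t)^k,$$ where the expectation in the first line is over $(I_0,\dots,I_n)$ and the sums over $n$ run over $n\le\sup A_N$.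
   Context: Collective risk model (CRM): $N$ is a random variable with values in $\mathbb{N}_0$, cdf $F_N$, pmf $\gamma_N(n)=\Pr(N=n)$ and support $A_N=\{n:\gamma_N(n)>0\}$; $\underline X=\{X_j\}_{j\ge1}$ is a sequence of identically distributed strictly positive random variables with common cdf $F_X$ (generic copy $X$); $S=\sum_{j\ge1}X_j\mathbb{1}_{\{N\ge j\}}$. $\mathcal L_Y(t)=E[e^{-tY}]$ is the Laplace–Stieltjes transform. A $d$-variate FGM copula with parameters $\theta_{j_1\dots j_k}$ is $C(u_1,\dots,u_d)=\prod_{m=1}^d u_m\big(1+\sum_{k=2}^d\sum_{j_1<\dots<j_k}\theta_{j_1\dots j_k}\bar u_{j_1}\cdots\bar u_{j_k}\big)$, $\bar u=1-u$, with parameters such that $1+\sum_{k}\sum_{j_1<\dots<j_k}\theta_{j_1\dots j_k}\varepsilon_{j_1}\cdots\varepsilon_{j_k}\ge0$ for all $\varepsilon\in\{-1,1\}^d$. To it is associated the random vector $\boldsymbol I$ on $\{0,1\}^d$ with pmf $f_{\boldsymbol I}(\boldsymbol i)=2^{-d}\big(1+\sum_{k=2}^d\sum_{j_1<\dots<j_k}(-1)^{i_{j_1}+\dots+i_{j_k}}\theta_{j_1\dots j_k}\big)$ (components Bernoulli$(1/2)$). A CRM belongs to $\aleph^{FGM}$ if for every $k\in\mathbb{N}_1$, $k\le\sup A_N$, $F_{N,X_1,\dots,X_k}(n,x_1,\dots,x_k)=C_k(F_N(n),F_X(x_1),\dots,F_X(x_k))$ for a $(k+1)$-variate FGM copula $C_k$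 with coordinates indexed $0,\dots,k$ (index $0$ for $N$); the associated vectors $(I_0,\dots,I_k)$ are consistent and form a sequence $\{I_j\}_{j\ge0}$. It belongs to $\aleph^{FGM*}$ if in addition $(N,X_1,\dots,X_k)\overset d=(N,X_{\pi(1)},\dots,X_{\pi(k)})$ for all such $k$ and permutations $\pi$. For a random variable $Y$, $Y_{[1]}$, $Y_{[2]}$ denote the minimum and maximum of two iid copies of $Y$; $\gamma_{N_{[j]}}(n)=\Pr(N_{[j]}=n)$. *)

theory Defs
  imports "HOL-Probability.Probability" "HOL-Combinatorics.Permutations"
begin

text \<open>FGM parameters of a consistent family of FGM copulas are given by a single
  function theta on finite index sets (index 0 for N, indices 1..k for X_1..X_k);
  the (k+1)-variate copula C_k uses the parameters theta J for J a subset of {0..k}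
  with card J at least 2.\<close>

definition fgm_index_sets :: "nat \<Rightarrow> nat set set" where
  "fgm_index_sets k = {J. J \<subseteq> {0..k} \<and> 2 \<le> card J}"

definition fgm_copula :: "(nat set \<Rightarrow> real) \<Rightarrow> nat \<Rightarrow> (nat \<Rightarrow> real) \<Rightarrow> real" where
  "fgm_copula \<theta> k u =
     (\<Prod>m\<in>{0..k}. u m) * (1 + (\<Sum>J\<in>fgm_index_sets k. \<theta> J * (\<Prod>j\<in>J. 1 - u j)))"

definition fgm_admissible :: "(nat set \<Rightarrow> real) \<Rightarrow> nat \<Rightarrow> bool" where
  "fgm_admissible \<theta> k \<longleftrightarrow>
     (\<forall>\<epsilon>\<in>{0..k} \<rightarrow>\<^sub>E {-1, 1::real}.
        0 \<le> 1 + (\<Sum>J\<in>fgm_index_sets k. \<theta> J * (\<Prod>j\<in>J. \<epsilon> j)))"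

text \<open>pmf of the associated Bernoulli vector (I_0,...,I_k) on {0,1}^{k+1}.\<close>
definition fgm_pmf :: "(nat set \<Rightarrow> real) \<Rightarrow> nat \<Rightarrow> (nat \<Rightarrow> nat) \<Rightarrow> real" where
  "fgm_pmf \<theta> k i =
     (1/2) ^ (k + 1) * (1 + (\<Sum>J\<in>fgm_index_sets k. (-1) ^ (\<Sum>j\<in>J. i j) * \<theta> J))"

definition bern_vectors :: "nat \<Rightarrow> (nat \<Rightarrow> nat) set" where
  "bern_vectors k = {0..k} \<rightarrow>\<^sub>E {0, 1}"

definition fgm_expect :: "(nat set \<Rightarrow> real) \<Rightarrow> nat \<Rightarrow> ((nat \<Rightarrow> nat) \<Rightarrow> real) \<Rightarrow> real" where
  "fgm_expect \<theta> k g = (\<Sum>i\<in>bern_vectors k. fgm_pmf \<theta> k i * g i)"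

definition prob_I0_K :: "(nat set \<Rightarrow> real) \<Rightarrow> nat \<Rightarrow> nat \<Rightarrow> nat \<Rightarrow> real" where
  "prob_I0_K \<theta> n a k =
     (\<Sum>i\<in>{i\<in>bern_vectors n. i 0 = a \<and> (\<Sum>j=1..n. i j) = k}. fgm_pmf \<theta> n i)"

text \<open>ord2 i x y is the (1+i)-th order statistic of {x,y}: min for i = 0, max for i = 1.\<close>
definition ord2 :: "nat \<Rightarrow> 'b::linorder \<Rightarrow> 'b \<Rightarrow> 'b" where
  "ord2 i x y = (if i = 0 then min x y else max x y)"

definition pmf_ord2 :: "nat measure \<Rightarrow> nat \<Rightarrow> nat \<Rightarrow> real" where
  "pmf_ord2 \<mu> i n = measure (\<mu> \<Otimes>\<^sub>M \<mu>) {p\<in>space (\<mu> \<Otimes>\<^sub>M \<mu>). ord2 i (fst p) (snd p) = n}"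

definition LST_ord2 :: "real measure \<Rightarrow> nat \<Rightarrow> real \<Rightarrow> real" where
  "LST_ord2 \<mu> i t = (\<integral>p. exp (- t * ord2 i (fst p) (snd p)) \<partial>(\<mu> \<Otimes>\<^sub>M \<mu>))"

text \<open>n \<le> sup A_N, where A_N is the support of the pmf of N.\<close>
definition le_sup_support :: "'a measure \<Rightarrow> ('a \<Rightarrow> nat) \<Rightarrow> nat \<Rightarrow> bool" where
  "le_sup_support M N n \<longleftrightarrow> (\<exists>m. 0 < measure M {\<omega>\<in>space M. N \<omega> = m} \<and> n \<le> m)"

definition aggregate :: "('a \<Rightarrow> nat) \<Rightarrow> (nat \<Rightarrow> 'a \<Rightarrow> real) \<Rightarrow> 'a \<Rightarrow> real" where
  "aggregate N X \<omega> = (\<Sum>j=1..N \<omega>. X j \<omega>)"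

end

theory Submission
  imports Defs
begin

definition G :: "nat \<Rightarrow> real \<Rightarrow> real" where
  "G a x = (if a = 0 then 2*x - x^2 else x^2)"

lemma sum_bern_prod:
  fixes f :: "nat \<Rightarrow> nat \<Rightarrow> real"
  shows "(\<Sum>i\<in>bern_vectors k. \<Prod>m\<in>{0..k}. f m (i m)) = (\<Prod>m\<in>{0..k}. f m 0 + f m (1::nat))"
proof -
  have "(\<Prod>m\<in>{0..k}. \<Sum>y\<in>{0,1::nat}. f m y) = (\<Sum>i\<in>{0..k} \<rightarrow>\<^sub>E {0,1}. \<Prod>m\<in>{0..k}. f m (i m))"
    by (rule prod_sum_PiE) auto
  then show ?thesis by (simp add: bern_vectors_def)
qed

lemma prod_if_J:
  fixes k :: nat and J :: "nat set"
  assumes "J \<subseteq> {0..k}"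
  shows "(\<Prod>m\<in>{0..k}. if m \<in> J then g m else 1) = (\<Prod>m\<in>J. (g m :: real))"
proof -
  have eq: "{0..k} \<inter> J = J" using assms by auto
  have "prod g ({0..k} \<inter> J) = (\<Prod>m\<in>{0..k}. if m \<in> J then g m else 1)"
    by (rule prod.inter_restrict) simp
  then show ?thesis unfolding eq by simp
qed

lemma fgm_copula_repr:
  "fgm_copula \<theta> k u = (\<Sum>i\<in>bern_vectors k. fgm_pmf \<theta> k i * (\<Prod>m\<in>{0..k}. G (i m) (u m)))"
proof -
  define P where "P i = (\<Prod>m\<in>{0..k}. G (i m) (u m))" for i :: "nat \<Rightarrow> nat"
  have fin: "finite (bern_vectors k)" by (simp add: bern_vectors_def finite_PiE)
  have finJ: "finite (fgm_index_sets k)" by (simp add: fgm_index_sets_def)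
  have s0: "(\<Sum>i\<in>bern_vectors k. P i) = (\<Prod>m\<in>{0..k}. 2 * u m)"
    unfolding P_def by (subst sum_bern_prod) (simp add: G_def power2_eq_square)
  have s1: "(\<Sum>i\<in>bern_vectors k. (-1) ^ (\<Sum>j\<in>J. i j) * P i) = (\<Prod>m\<in>{0..k}. 2 * u m) * (\<Prod>j\<in>J. 1 - u j)"
    if J: "J \<in> fgm_index_sets k" for J
  proof -
    have Jk: "J \<subseteq> {0..k}" using J by (simp add: fgm_index_sets_def)
    have "(-1::real) ^ (\<Sum>j\<in>J. i j) = (\<Prod>m\<in>{0..k}. if m \<in> J then (-1) ^ (i m) else 1)" for i
      by (simp add: prod_if_J[OF Jk] power_sum)
    then have "(\<Sum>i\<in>bern_vectors k. (-1) ^ (\<Sum>j\<in>J. i j) * P i)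
       = (\<Sum>i\<in>bern_vectors k. \<Prod>m\<in>{0..k}. (if m \<in> J then (-1) ^ (i m) else 1) * G (i m) (u m))"
      by (simp add: P_def prod.distrib)
    also have "\<dots> = (\<Prod>m\<in>{0..k}. 2 * u m * (if m \<in> J then 1 - u m else 1))"
      by (subst sum_bern_prod) (auto intro!: prod.cong simp: G_def power2_eq_square algebra_simps)
    also have "\<dots> = (\<Prod>m\<in>{0..k}. 2 * u m) * (\<Prod>j\<in>J. 1 - u j)"
      by (simp add: prod.distrib prod_if_J[OF Jk])
    finally show ?thesis .
  qed
  have "(\<Sum>i\<in>bern_vectors k. fgm_pmf \<theta> k i * P i)
     = (1/2)^(k+1) * ((\<Sum>i\<in>bern_vectors k. P i)
        + (\<Sum>J\<in>fgm_index_sets k. \<theta> J * (\<Sum>i\<in>bern_vectors k. (-1) ^ (\<Sum>j\<in>J. i j) * P i)))"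
    by (simp add: fgm_pmf_def sum_distrib_left sum_distrib_right sum.distrib algebra_simps
        sum.swap[of _ "fgm_index_sets k"])
  also have "\<dots> = (1/2)^(k+1) * ((\<Prod>m\<in>{0..k}. 2 * u m)
        + (\<Sum>J\<in>fgm_index_sets k. \<theta> J * ((\<Prod>m\<in>{0..k}. 2 * u m) * (\<Prod>j\<in>J. 1 - u j))))"
    using s1 by (simp add: s0)
  also have "\<dots> = (1/2)^(k+1) * (\<Prod>m\<in>{0..k}. 2 * u m) *
       (1 + (\<Sum>J\<in>fgm_index_sets k. \<theta> J * (\<Prod>j\<in>J. 1 - u j)))"
    by (simp add: sum_distrib_left algebra_simps)
  also have "(1/2::real)^(k+1) * (\<Prod>m\<in>{0..k}. 2 * u m) = (\<Prod>m\<in>{0..k}. u m)"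
    by (simp add: prod.distrib power_one_over[symmetric] flip: power_mult_distrib)
  finally show ?thesis by (simp add: fgm_copula_def P_def)
qed

lemma measure_Times_prob:
  assumes P: "prob_space \<mu>" and A: "A \<in> sets \<mu>" and B: "B \<in> sets \<mu>"
  shows "measure (\<mu> \<Otimes>\<^sub>M \<mu>) (A \<times> B) = measure \<mu> A * measure \<mu> B"
proof -
  interpret prob_space \<mu> by fact
  have "emeasure (\<mu> \<Otimes>\<^sub>M \<mu>) (A \<times> B) = emeasure \<mu> A * emeasure \<mu> B"
    by (rule emeasure_pair_measure_Times[OF A B])
  then show ?thesis
    by (simp add: measure_def enn2real_mult)
qed

lemma ord2_cdf:
  fixes \<mu> :: "'b::linorder measure"
  assumes P: "prob_space \<mu>" and sp: "space \<mu> = UNIV"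
    and s1: "\<And>y. {..y} \<in> sets \<mu>" and s2: "\<And>y. {y<..} \<in> sets \<mu>"
  shows "measure (\<mu> \<Otimes>\<^sub>M \<mu>) {p\<in>space (\<mu> \<Otimes>\<^sub>M \<mu>). ord2 a (fst p) (snd p) \<le> y}
         = G a (measure \<mu> {..y})"
proof -
  interpret prob_space \<mu> by fact
  interpret pair_prob_space \<mu> \<mu> by unfold_locales
  have spp: "space (\<mu> \<Otimes>\<^sub>M \<mu>) = UNIV" by (simp add: space_pair_measure sp)
  have c: "measure \<mu> {y<..} = 1 - measure \<mu> {..y}"
  proof -
    have "{y<..} = space \<mu> - {..y}" by (auto simp: sp)
    then show ?thesis using prob_space.prob_compl[OF P s1] by simp
  qed
  show ?thesis
  proof (cases "a = 0")
    case True
    have "{p\<in>space (\<mu> \<Otimes>\<^sub>M \<mu>). ord2 a (fst p) (snd p) \<le> y} = space (\<mu> \<Otimes>\<^sub>M \<mu>) - {y<..} \<times> {y<..}"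
      using True unfolding spp ord2_def by (auto simp: min_le_iff_disj not_le)
    moreover have "{y<..} \<times> {y<..} \<in> sets (\<mu> \<Otimes>\<^sub>M \<mu>)" using s2 by simp
    ultimately have "measure (\<mu> \<Otimes>\<^sub>M \<mu>) {p\<in>space (\<mu> \<Otimes>\<^sub>M \<mu>). ord2 a (fst p) (snd p) \<le> y}
       = 1 - measure \<mu> {y<..} * measure \<mu> {y<..}"
      using P.prob_compl measure_Times_prob[OF assms(1) s2 s2] by simp
    then show ?thesis using True unfolding c G_def by (simp add: power2_eq_square algebra_simps)
  next
    case False
    have "{p\<in>space (\<mu> \<Otimes>\<^sub>M \<mu>). ord2 a (fst p) (snd p) \<le> y} = {..y} \<times> {..y}"
      using False unfolding spp ord2_def by auto
    then show ?thesis using False measure_Times_prob[OF assms(1) s1 s1]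
      by (simp add: G_def power2_eq_square)
  qed
qed

definition hx :: "real \<Rightarrow> real \<Rightarrow> real" where
  "hx t y = (if 0 \<le> y then t * exp (- t * y) else 0)"

lemma hx_meas[measurable]: "hx t \<in> borel_measurable borel"
  unfolding hx_def by measurable

lemma laplace1:
  assumes t: "0 < t" and x: "0 \<le> x"
  shows "(\<integral>\<^sup>+y. (if x \<le> y then ennreal (hx t y) else 0) \<partial>lborel) = ennreal (exp (- t * x))"
proof -
  have l0: "LIM y at_top. (- t) * y :> at_bot"
    by (rule filterlim_tendsto_neg_mult_at_bot[OF tendsto_const]) (use t in \<open>auto intro: filterlim_ident\<close>)
  have lim: "((\<lambda>y. exp (- t * y)) \<longlongrightarrow> 0) at_top"
    by (rule filterlim_compose[OF exp_at_bot]) (use l0 in simp)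
  have lim': "((\<lambda>y. - exp (- t * y)) \<longlongrightarrow> 0) at_top"
    using tendsto_minus[OF lim] by simp
  have "(\<integral>\<^sup>+y. ennreal (t * exp (- t * y)) * indicator {x..} y \<partial>lborel) = 0 - (- exp (- t * x))"
    by (rule nn_integral_FTC_atLeast[where F="\<lambda>y. - exp (- t * y)"])
       (use t lim' in \<open>auto intro!: derivative_eq_intros\<close>)
  moreover have "(\<integral>\<^sup>+y. (if x \<le> y then ennreal (hx t y) else 0) \<partial>lborel)
      = (\<integral>\<^sup>+y. ennreal (t * exp (- t * y)) * indicator {x..} y \<partial>lborel)"
    using x by (intro nn_integral_cong) (auto simp: hx_def indicator_def)
  ultimately show ?thesis by simp
qed

lemma laplace_prod:
  fixes M :: "'a measure" and Z :: "nat \<Rightarrow> 'a \<Rightarrow> real" and J :: "nat set"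
  assumes P: "prob_space M" and t: "0 < t" and fin: "finite J"
    and A: "A \<in> sets M" and Zm: "\<And>j. j \<in> J \<Longrightarrow> Z j \<in> borel_measurable M"
    and Zpos: "\<And>j. j \<in> J \<Longrightarrow> AE \<omega> in M. 0 \<le> Z j \<omega>"
  shows "(\<integral>\<^sup>+\<omega>. indicator A \<omega> * (\<Prod>j\<in>J. ennreal (exp (- t * Z j \<omega>))) \<partial>M)
       = (\<integral>\<^sup>+y. emeasure M {\<omega>\<in>A. \<forall>j\<in>J. Z j \<omega> \<le> y j} * (\<Prod>j\<in>J. ennreal (hx t (y j)))
            \<partial>PiM J (\<lambda>_. lborel))"
proof -
  interpret prob_space M by fact
  interpret PL: product_sigma_finite "\<lambda>_::nat. lborel" by standard
  interpret SP: sigma_finite_measure "PiM J (\<lambda>_::nat. lborel)" by (rule PL.sigma_finite[OF fin])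
  interpret pair_sigma_finite M "PiM J (\<lambda>_::nat. lborel)" by unfold_locales
  define k where "k j \<omega> y = (if Z j \<omega> \<le> y then ennreal (hx t y) else 0)" for j \<omega> y
  have km: "(\<lambda>y. k j \<omega> y) \<in> borel_measurable borel" for j \<omega>
    unfolding k_def by measurable
  have AEZ: "AE \<omega> in M. \<forall>j\<in>J. 0 \<le> Z j \<omega>"
    using fin Zpos by (simp add: AE_finite_all)
  have "(\<integral>\<^sup>+\<omega>. indicator A \<omega> * (\<Prod>j\<in>J. ennreal (exp (- t * Z j \<omega>))) \<partial>M)
      = (\<integral>\<^sup>+\<omega>. indicator A \<omega> * (\<Prod>j\<in>J. \<integral>\<^sup>+y. k j \<omega> y \<partial>lborel) \<partial>M)"
    using AEZ by (intro nn_integral_cong_AE) (auto intro!: prod.cong simp: k_def laplace1[OF t])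
  also have "\<dots> = (\<integral>\<^sup>+\<omega>. indicator A \<omega> * (\<integral>\<^sup>+y. (\<Prod>j\<in>J. k j \<omega> (y j)) \<partial>PiM J (\<lambda>_. lborel)) \<partial>M)"
    by (subst PL.product_nn_integral_prod[OF fin]) (auto simp: km)
  also have "\<dots> = (\<integral>\<^sup>+\<omega>. (\<integral>\<^sup>+y. indicator A \<omega> * (\<Prod>j\<in>J. k j \<omega> (y j)) \<partial>PiM J (\<lambda>_. lborel)) \<partial>M)"
    by (subst nn_integral_cmult) (auto simp: k_def)
  also have "\<dots> = (\<integral>\<^sup>+y. (\<integral>\<^sup>+\<omega>. indicator A \<omega> * (\<Prod>j\<in>J. k j \<omega> (y j)) \<partial>M) \<partial>PiM J (\<lambda>_. lborel))"
  proof (rule Fubini'[symmetric])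
    show "(\<lambda>(\<omega>, y). indicator A \<omega> * (\<Prod>j\<in>J. k j \<omega> (y j))) \<in> borel_measurable (M \<Otimes>\<^sub>M PiM J (\<lambda>_. lborel))"
      unfolding k_def using A Zm by measurable
  qed
  also have "\<dots> = (\<integral>\<^sup>+y. emeasure M {\<omega>\<in>A. \<forall>j\<in>J. Z j \<omega> \<le> y j} * (\<Prod>j\<in>J. ennreal (hx t (y j)))
            \<partial>PiM J (\<lambda>_. lborel))"
  proof (rule nn_integral_cong)
    fix y
    let ?S = "{\<omega>\<in>A. \<forall>j\<in>J. Z j \<omega> \<le> y j}"
    have S: "?S \<in> sets M" using A Zm fin by measurable
    have "(\<integral>\<^sup>+\<omega>. indicator A \<omega> * (\<Prod>j\<in>J. k j \<omega> (y j)) \<partial>M)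
        = (\<integral>\<^sup>+\<omega>. (\<Prod>j\<in>J. ennreal (hx t (y j))) * indicator ?S \<omega> \<partial>M)"
    proof (rule nn_integral_cong)
      fix \<omega>
      show "indicator A \<omega> * (\<Prod>j\<in>J. k j \<omega> (y j)) = (\<Prod>j\<in>J. ennreal (hx t (y j))) * indicator ?S \<omega>"
      proof (cases "\<omega> \<in> ?S")
        case True
        then show ?thesis by (auto simp: k_def intro!: prod.cong)
      next
        case False
        then show ?thesis
        proof (cases "\<omega> \<in> A")
          case True
          with False obtain j where "j \<in> J" "\<not> Z j \<omega> \<le> y j" by auto
          then have "(\<Prod>j\<in>J. k j \<omega> (y j)) = 0" using fin
            by (intro prod_zero) (auto simp: k_def)
          then show ?thesis using False by simp
        qed simp
      qed
    qed
    also have "\<dots> = (\<Prod>j\<in>J. ennreal (hx t (y j))) * emeasure M ?S"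
      by (rule nn_integral_cmult_indicator[OF S])
    finally show "(\<integral>\<^sup>+\<omega>. indicator A \<omega> * (\<Prod>j\<in>J. k j \<omega> (y j)) \<partial>M)
       = emeasure M ?S * (\<Prod>j\<in>J. ennreal (hx t (y j)))" by (simp add: mult.commute)
  qed
  finally show ?thesis .
qed

lemma G_nonneg: "0 \<le> v \<Longrightarrow> v \<le> 1 \<Longrightarrow> 0 \<le> G a v"
  using mult_left_mono[of v 1 v] by (auto simp: G_def power2_eq_square)

lemma LST_via_cdf:
  fixes \<mu> :: "real measure"
  assumes P\<mu>: "prob_space \<mu>" and s\<mu>: "sets \<mu> = sets borel" and pos: "AE x in \<mu>. 0 \<le> x"
    and t: "0 < t"
  shows "(\<integral>\<^sup>+y. ennreal (G a (measure \<mu> {..y})) * ennreal (hx t y) \<partial>lborel) = ennreal (LST_ord2 \<mu> a t)"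
proof -
  interpret pair_prob_space \<mu> \<mu> using P\<mu> by (simp add: pair_prob_space_def pair_sigma_finite_def prob_space_imp_sigma_finite)
  have PP: "prob_space (\<mu> \<Otimes>\<^sub>M \<mu>)" by (rule P.prob_space_axioms)
  have sp: "space \<mu> = UNIV" using sets_eq_imp_space_eq[OF s\<mu>] by simp
  have idm[measurable]: "(\<lambda>x. x) \<in> borel_measurable \<mu>" by (rule measurable_ident_sets[OF s\<mu>])
  define Z where "Z j p = ord2 a (fst p) (snd p)" for j :: nat and p :: "real \<times> real"
  have Zm: "Z 0 \<in> borel_measurable (\<mu> \<Otimes>\<^sub>M \<mu>)"
    unfolding Z_def ord2_def by measurable
  have Zpos: "AE p in \<mu> \<Otimes>\<^sub>M \<mu>. 0 \<le> Z 0 p"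
  proof (rule AE_pair_measure)
    show "{x \<in> space (\<mu> \<Otimes>\<^sub>M \<mu>). 0 \<le> Z 0 x} \<in> sets (\<mu> \<Otimes>\<^sub>M \<mu>)" using Zm by measurable
    show "AE x in \<mu>. AE y in \<mu>. 0 \<le> Z 0 (x, y)"
      using pos by eventually_elim (use pos in eventually_elim, auto simp: Z_def ord2_def)
  qed
  have "(\<integral>\<^sup>+p. indicator (space (\<mu> \<Otimes>\<^sub>M \<mu>)) p * (\<Prod>j\<in>{0}. ennreal (exp (- t * Z j p))) \<partial>(\<mu> \<Otimes>\<^sub>M \<mu>))
     = (\<integral>\<^sup>+y. emeasure (\<mu> \<Otimes>\<^sub>M \<mu>) {p\<in>space (\<mu> \<Otimes>\<^sub>M \<mu>). \<forall>j\<in>{0}. Z j p \<le> y j} * (\<Prod>j\<in>{0}. ennreal (hx t (y j)))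
            \<partial>PiM {0} (\<lambda>_. lborel))"
    by (rule laplace_prod[OF PP t]) (use Zm Zpos in auto)
  also have "\<dots> = (\<integral>\<^sup>+y. emeasure (\<mu> \<Otimes>\<^sub>M \<mu>) {p\<in>space (\<mu> \<Otimes>\<^sub>M \<mu>). Z 0 p \<le> y} * ennreal (hx t y) \<partial>lborel)"
  proof -
    interpret PL: product_sigma_finite "\<lambda>_::nat. lborel" by standard
    have m: "(\<lambda>y. emeasure (\<mu> \<Otimes>\<^sub>M \<mu>) {p\<in>space (\<mu> \<Otimes>\<^sub>M \<mu>). Z 0 p \<le> y} * ennreal (hx t y)) \<in> borel_measurable borel"
    proof -
      have eqf: "emeasure (\<mu> \<Otimes>\<^sub>M \<mu>) {p\<in>space (\<mu> \<Otimes>\<^sub>M \<mu>). Z 0 p \<le> y}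
          = ennreal (G a (measure \<mu> {..y}))" for y
        using ord2_cdf[OF P\<mu> sp, of a] s\<mu> by (auto simp: Z_def P.emeasure_eq_measure)
      have [measurable]: "(\<lambda>y. measure \<mu> {..y}) \<in> borel_measurable borel"
        by (rule borel_measurable_mono) (auto intro!: monoI M1.finite_measure_mono simp: s\<mu>)
      show ?thesis unfolding eqf G_def by measurable
    qed
    show ?thesis
      using PL.product_nn_integral_singleton[OF m[folded measurable_lborel2], of 0] by simp
  qed
  also have "\<dots> = (\<integral>\<^sup>+y. ennreal (G a (measure \<mu> {..y})) * ennreal (hx t y) \<partial>lborel)"
    using ord2_cdf[OF P\<mu> sp, of a] s\<mu> by (auto intro!: nn_integral_cong simp: Z_def P.emeasure_eq_measure)
  finally have eq0: "(\<integral>\<^sup>+p. indicator (space (\<mu> \<Otimes>\<^sub>M \<mu>)) p * (\<Prod>j\<in>{0}. ennreal (exp (- t * Z j p))) \<partial>(\<mu> \<Otimes>\<^sub>M \<mu>))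
      = (\<integral>\<^sup>+y. ennreal (G a (measure \<mu> {..y})) * ennreal (hx t y) \<partial>lborel)" .
  have "(\<integral>\<^sup>+p. indicator (space (\<mu> \<Otimes>\<^sub>M \<mu>)) p * (\<Prod>j\<in>{0}. ennreal (exp (- t * Z j p))) \<partial>(\<mu> \<Otimes>\<^sub>M \<mu>))
     = (\<integral>\<^sup>+p. ennreal (exp (- t * Z 0 p)) \<partial>(\<mu> \<Otimes>\<^sub>M \<mu>))"
    by (intro nn_integral_cong) simp
  with eq0 have eq: "(\<integral>\<^sup>+p. ennreal (exp (- t * Z 0 p)) \<partial>(\<mu> \<Otimes>\<^sub>M \<mu>))
      = (\<integral>\<^sup>+y. ennreal (G a (measure \<mu> {..y})) * ennreal (hx t y) \<partial>lborel)" by simp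
  have fin: "(\<integral>\<^sup>+p. ennreal (exp (- t * Z 0 p)) \<partial>(\<mu> \<Otimes>\<^sub>M \<mu>)) \<le> 1"
  proof -
    have "(\<integral>\<^sup>+p. ennreal (exp (- t * Z 0 p)) \<partial>(\<mu> \<Otimes>\<^sub>M \<mu>)) \<le> (\<integral>\<^sup>+p. 1 \<partial>(\<mu> \<Otimes>\<^sub>M \<mu>))"
      using Zpos by (intro nn_integral_mono_AE) (auto elim!: eventually_mono simp: t less_imp_le)
    then show ?thesis by (simp add: P.emeasure_space_1)
  qed
  have "LST_ord2 \<mu> a t = enn2real (\<integral>\<^sup>+p. ennreal (exp (- t * Z 0 p)) \<partial>(\<mu> \<Otimes>\<^sub>M \<mu>))"
  proof -
    have "(\<lambda>p. exp (- t * ord2 a (fst p) (snd p))) \<in> borel_measurable (\<mu> \<Otimes>\<^sub>M \<mu>)"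
      unfolding ord2_def by measurable
    then show ?thesis
      unfolding LST_ord2_def Z_def by (rule integral_eq_nn_integral) simp
  qed
  moreover have "(\<integral>\<^sup>+p. ennreal (exp (- t * Z 0 p)) \<partial>(\<mu> \<Otimes>\<^sub>M \<mu>)) < \<top>"
    using fin by (simp add: le_less_trans)
  ultimately show ?thesis using eq by simp
qed

lemma fgm_pmf_nonneg:
  assumes adm: "fgm_admissible \<theta> k" and i: "i \<in> bern_vectors k"
  shows "0 \<le> fgm_pmf \<theta> k i"
proof -
  define \<epsilon> where "\<epsilon> = (\<lambda>m\<in>{0..k}. (-1::real) ^ (i m))"
  have e: "\<epsilon> \<in> {0..k} \<rightarrow>\<^sub>E {-1, 1}" unfolding \<epsilon>_def
    by (auto simp: neg_one_even_power neg_one_odd_power) (metis neg_one_even_power neg_one_odd_power)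
  have "(\<Sum>J\<in>fgm_index_sets k. (-1) ^ (\<Sum>j\<in>J. i j) * \<theta> J) = (\<Sum>J\<in>fgm_index_sets k. \<theta> J * (\<Prod>j\<in>J. \<epsilon> j))"
  proof (rule sum.cong)
    fix J assume "J \<in> fgm_index_sets k"
    then have "J \<subseteq> {0..k}" by (simp add: fgm_index_sets_def)
    then have "(\<Prod>j\<in>J. \<epsilon> j) = (\<Prod>j\<in>J. (-1) ^ (i j))" unfolding \<epsilon>_def by (intro prod.cong) auto
    then show "(-1) ^ (\<Sum>j\<in>J. i j) * \<theta> J = \<theta> J * (\<Prod>j\<in>J. \<epsilon> j)" by (simp add: power_sum)
  qed simp
  with adm e show ?thesis unfolding fgm_admissible_def fgm_pmf_def by auto
qed

lemma prod_L:
  fixes L :: "nat \<Rightarrow> real"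
  assumes "\<And>j. j \<in> {1..n} \<Longrightarrow> i j \<in> {0, 1}"
  shows "(\<Prod>j=1..n. L (i j)) = L 0 ^ (n - (\<Sum>j=1..n. i j)) * L 1 ^ (\<Sum>j=1..n. i j)"
  using assms
proof (induction n)
  case 0 then show ?case by simp
next
  case (Suc n)
  have le: "(\<Sum>j=1..n. i j) \<le> n"
  proof -
    have "(\<Sum>j=1..n. i j) \<le> (\<Sum>j=1..n. 1)"
    proof (intro sum_mono)
      fix j assume "j \<in> {1..n}"
      then have "i j \<in> {0,1}" using Suc.prems by auto
      then show "i j \<le> 1" by auto
    qed
    then show ?thesis by simp
  qed
  have IH: "(\<Prod>j=1..n. L (i j)) = L 0 ^ (n - (\<Sum>j=1..n. i j)) * L 1 ^ (\<Sum>j=1..n. i j)"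
    using Suc by auto
  have p: "(\<Prod>j=1..Suc n. L (i j)) = (\<Prod>j=1..n. L (i j)) * L (i (Suc n))" by simp
  have s: "(\<Sum>j=1..Suc n. i j) = (\<Sum>j=1..n. i j) + i (Suc n)" by simp
  have "i (Suc n) \<in> {0,1}" using Suc.prems by auto
  then show ?case
  proof
    assume i0: "i (Suc n) = 0"
    have "Suc n - (\<Sum>j=1..n. i j) = Suc (n - (\<Sum>j=1..n. i j))" using le by (rule Suc_diff_le)
    then show ?thesis unfolding p s IH i0 by (simp add: algebra_simps)
  next
    assume "i (Suc n) \<in> {1}"
    then have i1: "i (Suc n) = 1" by simp
    show ?thesis unfolding p s IH i1 by (simp add: algebra_simps)
  qed
qed

lemma regroup:
  fixes p L :: "nat \<Rightarrow> real"
  shows "fgm_expect \<theta> n (\<lambda>i. p (i 0) * (\<Prod>j=1..n. L (i j)))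
     = (\<Sum>a\<in>{0,1::nat}. p a * (\<Sum>k=0..n. prob_I0_K \<theta> n a k * L 0 ^ (n - k) * L 1 ^ k))"
proof -
  let ?B = "bern_vectors n"
  let ?K = "\<lambda>i. (\<Sum>j=1..n. i j)"
  have fin: "finite ?B" by (simp add: bern_vectors_def finite_PiE)
  have binv: "i j \<in> {0,1}" if "i \<in> ?B" "j \<in> {0..n}" for i j
    using that by (auto simp: bern_vectors_def PiE_iff)
  have Kle: "?K i \<le> n" if "i \<in> ?B" for i
  proof -
    have "?K i \<le> (\<Sum>j=1..n. 1)" using binv[OF that] by (intro sum_mono) fastforce
    then show ?thesis by simp
  qed
  define f where "f i = fgm_pmf \<theta> n i * (p (i 0) * (\<Prod>j=1..n. L (i j)))" for i
  have "fgm_expect \<theta> n (\<lambda>i. p (i 0) * (\<Prod>j=1..n. L (i j))) = (\<Sum>i\<in>?B. f i)"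
    by (simp add: fgm_expect_def f_def)
  also have "\<dots> = (\<Sum>ak\<in>{0,1::nat}\<times>{0..n}. \<Sum>i\<in>{i. i \<in> ?B \<and> (i 0, ?K i) = ak}. f i)"
  proof (rule sum.group[symmetric])
    show "(\<lambda>i. (i 0, ?K i)) ` ?B \<subseteq> {0,1::nat}\<times>{0..n}"
    proof
      fix x assume "x \<in> (\<lambda>i. (i 0, ?K i)) ` ?B"
      then obtain i where i: "i \<in> ?B" "x = (i 0, ?K i)" by auto
      have "i 0 \<in> {0,1}" using binv[OF i(1), of 0] by simp
      then show "x \<in> {0,1::nat}\<times>{0..n}" using i Kle[OF i(1)] by auto
    qed
  qed (use fin in auto)
  also have "\<dots> = (\<Sum>a\<in>{0,1::nat}. \<Sum>k=0..n. \<Sum>i\<in>{i. i \<in> ?B \<and> (i 0, ?K i) = (a, k)}. f i)"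
    by (subst sum.cartesian_product) (rule sum.cong; auto)
  also have "\<dots> = (\<Sum>a\<in>{0,1::nat}. \<Sum>k=0..n. prob_I0_K \<theta> n a k * p a * L 0 ^ (n - k) * L 1 ^ k)"
  proof (intro sum.cong refl)
    fix a k
    have "(\<Sum>i\<in>{i. i \<in> ?B \<and> (i 0, ?K i) = (a, k)}. f i)
        = (\<Sum>i\<in>{i\<in>?B. i 0 = a \<and> ?K i = k}. fgm_pmf \<theta> n i * (p a * (L 0 ^ (n - k) * L 1 ^ k)))"
    proof (rule sum.cong)
      fix i assume i: "i \<in> {i\<in>?B. i 0 = a \<and> ?K i = k}"
      then have "(\<Prod>j=1..n. L (i j)) = L 0 ^ (n - k) * L 1 ^ k"
        using prod_L[of n i L] binv by auto
      then show "f i = fgm_pmf \<theta> n i * (p a * (L 0 ^ (n - k) * L 1 ^ k))" using i by (simp add: f_def)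
    qed auto
    also have "\<dots> = prob_I0_K \<theta> n a k * p a * L 0 ^ (n - k) * L 1 ^ k"
      by (simp add: prob_I0_K_def sum_distrib_right mult.assoc)
    finally show "(\<Sum>i\<in>{i. i \<in> ?B \<and> (i 0, ?K i) = (a, k)}. f i) = prob_I0_K \<theta> n a k * p a * L 0 ^ (n - k) * L 1 ^ k" .
  qed
  finally show ?thesis by (simp add: sum_distrib_left mult.commute mult.left_commute)
qed

lemma L_FN:
  fixes M :: "'a measure" and N :: "'a \<Rightarrow> nat"
  assumes P: "prob_space M" and N_meas: "N \<in> measurable M (count_space UNIV)" and n: "1 \<le> n"
  shows "pmf_ord2 (distr M (count_space UNIV) N) a n
       = G a (measure M {\<omega>\<in>space M. N \<omega> \<le> n}) - G a (measure M {\<omega>\<in>space M. N \<omega> \<le> n - 1})"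
proof -
  define \<mu> where "\<mu> = distr M (count_space UNIV) N"
  have P\<mu>: "prob_space \<mu>" unfolding \<mu>_def by (rule prob_space.prob_space_distr[OF P N_meas])
  interpret pair_prob_space \<mu> \<mu> using P\<mu> by (simp add: pair_prob_space_def pair_sigma_finite_def prob_space_imp_sigma_finite)
  have sp: "space \<mu> = UNIV" by (simp add: \<mu>_def)
  have ss: "sets \<mu> = UNIV" by (simp add: \<mu>_def)
  have sets2: "sets (\<mu> \<Otimes>\<^sub>M \<mu>) = sets (count_space UNIV \<Otimes>\<^sub>M count_space (UNIV::nat set))"
    by (rule sets_pair_measure_cong) (simp_all add: \<mu>_def)
  have all: "S \<in> sets (\<mu> \<Otimes>\<^sub>M \<mu>)" for S
    unfolding sets2 pair_measure_countable[of "UNIV::nat set" "UNIV::nat set", simplified] by simp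
  have F: "measure \<mu> {..m} = measure M {\<omega>\<in>space M. N \<omega> \<le> m}" for m
    unfolding \<mu>_def using N_meas by (subst measure_distr) (auto intro!: arg_cong[where f="measure M"])
  have cdf: "measure (\<mu> \<Otimes>\<^sub>M \<mu>) {p\<in>space (\<mu> \<Otimes>\<^sub>M \<mu>). ord2 a (fst p) (snd p) \<le> m}
         = G a (measure M {\<omega>\<in>space M. N \<omega> \<le> m})" for m
    using ord2_cdf[OF P\<mu> sp, of a m] ss F by simp
  have eq: "{p\<in>space (\<mu> \<Otimes>\<^sub>M \<mu>). ord2 a (fst p) (snd p) = n}
     = {p\<in>space (\<mu> \<Otimes>\<^sub>M \<mu>). ord2 a (fst p) (snd p) \<le> n} - {p\<in>space (\<mu> \<Otimes>\<^sub>M \<mu>). ord2 a (fst p) (snd p) \<le> n - 1}"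
    using n by auto
  have "pmf_ord2 \<mu> a n = measure (\<mu> \<Otimes>\<^sub>M \<mu>) {p\<in>space (\<mu> \<Otimes>\<^sub>M \<mu>). ord2 a (fst p) (snd p) = n}"
    by (simp add: pmf_ord2_def)
  also have "\<dots> = measure (\<mu> \<Otimes>\<^sub>M \<mu>) {p\<in>space (\<mu> \<Otimes>\<^sub>M \<mu>). ord2 a (fst p) (snd p) \<le> n}
      - measure (\<mu> \<Otimes>\<^sub>M \<mu>) {p\<in>space (\<mu> \<Otimes>\<^sub>M \<mu>). ord2 a (fst p) (snd p) \<le> n - 1}"
    unfolding eq by (rule P.finite_measure_Diff) (auto intro: all)
  finally show ?thesis unfolding cdf by (simp only: \<mu>_def)
qed

lemma L_PN:
  fixes M :: "'a measure" and N :: "'a \<Rightarrow> nat"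
  assumes P: "prob_space M" and N_meas[measurable]: "N \<in> measurable M (count_space UNIV)" and n: "1 \<le> n"
  shows "measure M {\<omega>\<in>space M. N \<omega> = n}
       = measure M {\<omega>\<in>space M. N \<omega> \<le> n} - measure M {\<omega>\<in>space M. N \<omega> \<le> n - 1}"
proof -
  interpret prob_space M by fact
  have eq: "{\<omega>\<in>space M. N \<omega> = n} = {\<omega>\<in>space M. N \<omega> \<le> n} - {\<omega>\<in>space M. N \<omega> \<le> n - 1}"
    using n by auto
  show ?thesis unfolding eq by (rule finite_measure_Diff) auto
qed

lemma L_marg:
  "(\<Sum>i\<in>bern_vectors n. fgm_pmf \<theta> n i * G (i 0) v) = v"
proof -
  define u where "u m = (if m = 0 then v else 1)" for m :: nat
  have "fgm_copula \<theta> n u = v"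
  proof -
    have "(\<Prod>j\<in>J. 1 - u j) = 0" if "J \<in> fgm_index_sets n" for J
    proof -
      have "2 \<le> card J" "finite J" using that by (auto simp: fgm_index_sets_def intro: finite_subset)
      then obtain j where "j \<in> J" "j \<noteq> 0"
        by (metis card_le_Suc0_iff_eq insert_absorb insert_not_empty less_eq_Suc_le not_less_eq_eq numeral_2_eq_2 subsetI subset_singletonD)
      then show ?thesis using \<open>finite J\<close> by (intro prod_zero bexI[of _ j]) (auto simp: u_def)
    qed
    moreover have "(\<Prod>m\<in>{0..n}. u m) = v"
      by (simp add: u_def prod.atLeast0_atMost_Suc_shift[of _ n, simplified] del: prod.op_ivl_Suc prod.cl_ivl_Suc)
    ultimately show ?thesis by (simp add: fgm_copula_def)
  qed
  moreover have "(\<Prod>m\<in>{0..n}. G (i m) (u m)) = G (i 0) v" for i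
  proof -
    have "(\<Prod>m\<in>{0..n}. G (i m) (u m)) = G (i 0) (u 0) * (\<Prod>m\<in>{Suc 0..n}. G (i m) (u m))"
      by (rule prod.atLeast_Suc_atMost) simp
    also have "(\<Prod>m\<in>{Suc 0..n}. G (i m) (u m)) = 1"
      by (rule prod.neutral) (auto simp: u_def G_def)
    finally show ?thesis by (simp add: u_def)
  qed
  ultimately show ?thesis using fgm_copula_repr[of \<theta> n u] by simp
qed

lemma L_P3:
  fixes M :: "'a measure" and N :: "'a \<Rightarrow> nat" and X :: "nat \<Rightarrow> 'a \<Rightarrow> real"
  assumes P: "prob_space M"
    and N_meas[measurable]: "N \<in> measurable M (count_space UNIV)"
    and X_meas: "\<And>j. 1 \<le> j \<Longrightarrow> X j \<in> borel_measurable M"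
    and copula: "\<And>m x. measure M {\<omega>\<in>space M. N \<omega> \<le> m \<and> (\<forall>j\<in>{1..n}. X j \<omega> \<le> x j)}
        = fgm_copula \<theta> n (\<lambda>m'. if m' = 0 then measure M {\<omega>\<in>space M. N \<omega> \<le> m}
                                else measure M {\<omega>\<in>space M. X 1 \<omega> \<le> x m'})"
    and n: "1 \<le> n"
  shows "measure M {\<omega>\<in>space M. N \<omega> = n \<and> (\<forall>j\<in>{1..n}. X j \<omega> \<le> y j)}
    = (\<Sum>i\<in>bern_vectors n. fgm_pmf \<theta> n i * (pmf_ord2 (distr M (count_space UNIV) N) (i 0) n
         * (\<Prod>j=1..n. G (i j) (measure M {\<omega>\<in>space M. X 1 \<omega> \<le> y j}))))"
proof -
  interpret prob_space M by fact
  define FX where "FX j = measure M {\<omega>\<in>space M. X 1 \<omega> \<le> y j}" for j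
  define FN where "FN m = measure M {\<omega>\<in>space M. N \<omega> \<le> m}" for m
  define PR where "PR i = (\<Prod>j=1..n. G (i j) (FX j))" for i :: "nat \<Rightarrow> nat"
  have Xm: "X j \<in> borel_measurable M" if "j \<in> {1..n}" for j using X_meas that by auto
  have Sm: "{\<omega>\<in>space M. N \<omega> \<le> m \<and> (\<forall>j\<in>{1..n}. X j \<omega> \<le> y j)} \<in> sets M" for m
    using Xm by measurable
  have cm: "measure M {\<omega>\<in>space M. N \<omega> \<le> m \<and> (\<forall>j\<in>{1..n}. X j \<omega> \<le> y j)}
      = (\<Sum>i\<in>bern_vectors n. fgm_pmf \<theta> n i * (G (i 0) (FN m) * PR i))" for m
  proof -
    define u where "u m' = (if m' = 0 then FN m else FX m')" for m'
    have "measure M {\<omega>\<in>space M. N \<omega> \<le> m \<and> (\<forall>j\<in>{1..n}. X j \<omega> \<le> y j)} = fgm_copula \<theta> n u"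
      unfolding copula u_def FN_def FX_def by simp
    also have "\<dots> = (\<Sum>i\<in>bern_vectors n. fgm_pmf \<theta> n i * (\<Prod>m'\<in>{0..n}. G (i m') (u m')))"
      by (rule fgm_copula_repr)
    also have "\<dots> = (\<Sum>i\<in>bern_vectors n. fgm_pmf \<theta> n i * (G (i 0) (FN m) * PR i))"
    proof (rule sum.cong)
      fix i
      have "(\<Prod>m'\<in>{0..n}. G (i m') (u m')) = G (i 0) (u 0) * (\<Prod>m'\<in>{Suc 0..n}. G (i m') (u m'))"
        by (rule prod.atLeast_Suc_atMost) simp
      also have "(\<Prod>m'\<in>{Suc 0..n}. G (i m') (u m')) = PR i"
        unfolding PR_def by (intro prod.cong) (auto simp: u_def)
      finally show "fgm_pmf \<theta> n i * (\<Prod>m'\<in>{0..n}. G (i m') (u m')) = fgm_pmf \<theta> n i * (G (i 0) (FN m) * PR i)"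
        by (simp add: u_def)
    qed simp
    finally show ?thesis .
  qed
  have eq: "{\<omega>\<in>space M. N \<omega> = n \<and> (\<forall>j\<in>{1..n}. X j \<omega> \<le> y j)}
     = {\<omega>\<in>space M. N \<omega> \<le> n \<and> (\<forall>j\<in>{1..n}. X j \<omega> \<le> y j)} - {\<omega>\<in>space M. N \<omega> \<le> n - 1 \<and> (\<forall>j\<in>{1..n}. X j \<omega> \<le> y j)}"
    using n by auto
  have "measure M {\<omega>\<in>space M. N \<omega> = n \<and> (\<forall>j\<in>{1..n}. X j \<omega> \<le> y j)}
     = measure M {\<omega>\<in>space M. N \<omega> \<le> n \<and> (\<forall>j\<in>{1..n}. X j \<omega> \<le> y j)} - measure M {\<omega>\<in>space M. N \<omega> \<le> n - 1 \<and> (\<forall>j\<in>{1..n}. X j \<omega> \<le> y j)}"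
    unfolding eq by (rule finite_measure_Diff) (rule Sm, rule Sm, auto)
  also have "\<dots> = (\<Sum>i\<in>bern_vectors n. fgm_pmf \<theta> n i * ((G (i 0) (FN n) - G (i 0) (FN (n - 1))) * PR i))"
    unfolding cm by (simp add: sum_subtractf[symmetric] algebra_simps)
  also have "\<dots> = (\<Sum>i\<in>bern_vectors n. fgm_pmf \<theta> n i * (pmf_ord2 (distr M (count_space UNIV) N) (i 0) n * PR i))"
    unfolding FN_def L_FN[OF P N_meas n] ..
  finally show ?thesis unfolding PR_def FX_def .
qed

lemma G_meas[measurable]: "G a \<in> borel_measurable borel"
  unfolding G_def[abs_def] by measurable

lemma per_n:
  fixes M :: "'a measure" and N :: "'a \<Rightarrow> nat" and X :: "nat \<Rightarrow> 'a \<Rightarrow> real"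
    and \<theta> :: "nat set \<Rightarrow> real" and t :: real
  assumes P: "prob_space M"
    and N_meas[measurable]: "N \<in> measurable M (count_space UNIV)"
    and X_meas: "\<And>j. 1 \<le> j \<Longrightarrow> X j \<in> borel_measurable M"
    and X_pos: "\<And>j. 1 \<le> j \<Longrightarrow> AE \<omega> in M. 0 < X j \<omega>"
    and adm: "\<And>k. 1 \<le> k \<Longrightarrow> le_sup_support M N k \<Longrightarrow> fgm_admissible \<theta> k"
    and copula: "\<And>k n x. 1 \<le> k \<Longrightarrow> le_sup_support M N k \<Longrightarrow>
        measure M {\<omega>\<in>space M. N \<omega> \<le> n \<and> (\<forall>j\<in>{1..k}. X j \<omega> \<le> x j)}
        = fgm_copula \<theta> k (\<lambda>m. if m = 0 then measure M {\<omega>\<in>space M. N \<omega> \<le> n}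
                                else measure M {\<omega>\<in>space M. X 1 \<omega> \<le> x m})"
    and t: "0 \<le> t" and n: "1 \<le> n"
  shows "(\<integral>\<^sup>+\<omega>. indicator {\<omega>\<in>space M. N \<omega> = n} \<omega> * (\<Prod>j\<in>{1..n}. ennreal (exp (- t * X j \<omega>))) \<partial>M)
     = ennreal (if le_sup_support M N n then fgm_expect \<theta> n (\<lambda>i. pmf_ord2 (distr M (count_space UNIV) N) (i 0) n
                   * (\<Prod>j=1..n. LST_ord2 (distr M borel (X 1)) (i j) t)) else 0)
     \<and> 0 \<le> (if le_sup_support M N n then fgm_expect \<theta> n (\<lambda>i. pmf_ord2 (distr M (count_space UNIV) N) (i 0) n
                   * (\<Prod>j=1..n. LST_ord2 (distr M borel (X 1)) (i j) t)) else 0)"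
proof -
  interpret prob_space M by fact
  define A where "A = {\<omega>\<in>space M. N \<omega> = n}"
  have Am: "A \<in> sets M" unfolding A_def by measurable
  define \<mu>N where "\<mu>N = distr M (count_space UNIV) N"
  define \<mu>X where "\<mu>X = distr M borel (X 1)"
  have X1m[measurable]: "X 1 \<in> borel_measurable M" by (rule X_meas) simp
  have P\<mu>X: "prob_space \<mu>X" unfolding \<mu>X_def by (rule prob_space_distr) (rule X1m)
  have PXX: "prob_space (\<mu>X \<Otimes>\<^sub>M \<mu>X)"
  proof -
    interpret pair_prob_space \<mu>X \<mu>X using P\<mu>X
      by (simp add: pair_prob_space_def pair_sigma_finite_def prob_space_imp_sigma_finite)
    show ?thesis by (rule P.prob_space_axioms)
  qed
  define r where "r = fgm_expect \<theta> n (\<lambda>i. pmf_ord2 \<mu>N (i 0) n * (\<Prod>j=1..n. LST_ord2 \<mu>X (i j) t))"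
  show ?thesis
  proof (cases "le_sup_support M N n")
    case False
    then have "\<not> (0 < measure M A \<and> n \<le> n)" unfolding A_def le_sup_support_def by blast
    then have "measure M A = 0" using measure_nonneg[of M A] by linarith
    then have "A \<in> null_sets M" using Am by (simp add: null_sets_def emeasure_eq_measure)
    then have "AE \<omega> in M. \<omega> \<notin> A" by (rule AE_not_in)
    then have "(\<integral>\<^sup>+\<omega>. indicator A \<omega> * (\<Prod>j\<in>{1..n}. ennreal (exp (- t * X j \<omega>))) \<partial>M) = (\<integral>\<^sup>+\<omega>. 0 \<partial>M)"
      by (intro nn_integral_cong_AE) (auto elim!: eventually_mono)
    then show ?thesis using False by (simp add: A_def)
  next
    case ls: True
    have pmf_nn: "0 \<le> fgm_pmf \<theta> n i" if "i \<in> bern_vectors n" for i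
      using fgm_pmf_nonneg[OF adm[OF n ls] that] .
    have ord_nn: "0 \<le> pmf_ord2 \<mu>N a n" for a by (simp add: pmf_ord2_def)
    have LST_nn: "0 \<le> LST_ord2 \<mu>X a t" for a unfolding LST_ord2_def by (rule integral_nonneg_AE) simp
    have r_nn: "0 \<le> r" unfolding r_def fgm_expect_def
      by (intro sum_nonneg mult_nonneg_nonneg pmf_nn ord_nn prod_nonneg LST_nn)
    have main: "(\<integral>\<^sup>+\<omega>. indicator A \<omega> * (\<Prod>j\<in>{1..n}. ennreal (exp (- t * X j \<omega>))) \<partial>M) = ennreal r"
    proof (cases "t = 0")
      case True
      have L1: "LST_ord2 \<mu>X a t = 1" for a
        using True prob_space.prob_space[OF PXX] by (simp add: LST_ord2_def)
      have "(\<integral>\<^sup>+\<omega>. indicator A \<omega> * (\<Prod>j\<in>{1..n}. ennreal (exp (- t * X j \<omega>))) \<partial>M) = emeasure M A"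
        using True Am by simp
      also have "\<dots> = ennreal (measure M A)" by (simp add: emeasure_eq_measure)
      also have "measure M A = r"
      proof -
        have "r = (\<Sum>i\<in>bern_vectors n. fgm_pmf \<theta> n i * G (i 0) (measure M {\<omega>\<in>space M. N \<omega> \<le> n}))
              - (\<Sum>i\<in>bern_vectors n. fgm_pmf \<theta> n i * G (i 0) (measure M {\<omega>\<in>space M. N \<omega> \<le> n - 1}))"
          unfolding r_def fgm_expect_def L1 \<mu>N_def L_FN[OF P N_meas n]
          by (simp add: sum_subtractf[symmetric] algebra_simps)
        also have "\<dots> = measure M A" unfolding L_marg A_def L_PN[OF P N_meas n] ..
        finally show ?thesis by simp
      qed
      finally show ?thesis .
    next
      case False
      with t have tp: "0 < t" by simp
      define FX where "FX y = measure M {\<omega>\<in>space M. X 1 \<omega> \<le> y}" for y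
      have FXmu: "measure \<mu>X {..y} = FX y" for y
        unfolding \<mu>X_def FX_def by (subst measure_distr[OF X1m]) (auto intro!: arg_cong[where f="measure M"])
      have FX01: "0 \<le> FX y" "FX y \<le> 1" for y unfolding FX_def by (auto intro: prob_le_1)
      have FXm[measurable]: "FX \<in> borel_measurable borel"
      proof -
        have X1s: "{\<omega>\<in>space M. X 1 \<omega> \<le> y} \<in> sets M" for y by measurable
        show ?thesis unfolding FX_def
          by (rule borel_measurable_mono, rule monoI, rule finite_measure_mono) (auto intro: X1s[unfolded One_nat_def])
      qed
      have AEX: "AE x in \<mu>X. 0 \<le> x"
        unfolding \<mu>X_def using X_pos[of 1] by (subst AE_distr_iff[OF X1m]) (auto elim!: eventually_mono)
      have LSTeq: "(\<integral>\<^sup>+y. ennreal (G a (FX y)) * ennreal (hx t y) \<partial>lborel) = ennreal (LST_ord2 \<mu>X a t)" for a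
        using LST_via_cdf[OF P\<mu>X _ AEX tp, of a] FXmu by (simp add: \<mu>X_def)
      define c where "c i = fgm_pmf \<theta> n i * pmf_ord2 \<mu>N (i 0) n" for i
      have c_nn: "0 \<le> c i" if "i \<in> bern_vectors n" for i unfolding c_def using pmf_nn[OF that] ord_nn by simp
      have G_nn: "0 \<le> G a (FX y)" for a y using G_nonneg[OF FX01] .
      have Xpos': "AE \<omega> in M. 0 \<le> X j \<omega>" if "j \<in> {1..n}" for j
        using X_pos[of j] that by (auto elim!: eventually_mono)
      have "(\<integral>\<^sup>+\<omega>. indicator A \<omega> * (\<Prod>j\<in>{1..n}. ennreal (exp (- t * X j \<omega>))) \<partial>M)
         = (\<integral>\<^sup>+y. emeasure M {\<omega>\<in>A. \<forall>j\<in>{1..n}. X j \<omega> \<le> y j} * (\<Prod>j\<in>{1..n}. ennreal (hx t (y j)))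
            \<partial>PiM {1..n} (\<lambda>_. lborel))"
        by (rule laplace_prod[OF P tp]) (use Am X_meas Xpos' in auto)
      also have "\<dots> = (\<integral>\<^sup>+y. (\<Sum>i\<in>bern_vectors n. ennreal (c i) *
             (\<Prod>j\<in>{1..n}. ennreal (G (i j) (FX (y j))) * ennreal (hx t (y j)))) \<partial>PiM {1..n} (\<lambda>_. lborel))"
      proof (rule nn_integral_cong)
        fix y :: "nat \<Rightarrow> real"
        have "{\<omega>\<in>A. \<forall>j\<in>{1..n}. X j \<omega> \<le> y j} = {\<omega>\<in>space M. N \<omega> = n \<and> (\<forall>j\<in>{1..n}. X j \<omega> \<le> y j)}"
          by (auto simp: A_def)
        then have "emeasure M {\<omega>\<in>A. \<forall>j\<in>{1..n}. X j \<omega> \<le> y j}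
            = ennreal (\<Sum>i\<in>bern_vectors n. c i * (\<Prod>j=1..n. G (i j) (FX (y j))))"
          using L_P3[OF P N_meas X_meas copula[OF n ls] n, of y]
          by (simp add: emeasure_eq_measure c_def FX_def \<mu>N_def mult.assoc)
        also have "\<dots> = (\<Sum>i\<in>bern_vectors n. ennreal (c i * (\<Prod>j=1..n. G (i j) (FX (y j)))))"
          by (rule sum_ennreal[symmetric]) (use c_nn G_nn in \<open>auto intro!: mult_nonneg_nonneg prod_nonneg\<close>)
        finally have e1: "emeasure M {\<omega>\<in>A. \<forall>j\<in>{1..n}. X j \<omega> \<le> y j}
            = (\<Sum>i\<in>bern_vectors n. ennreal (c i * (\<Prod>j=1..n. G (i j) (FX (y j)))))" .
        have e2: "ennreal (c i * (\<Prod>j=1..n. G (i j) (FX (y j)))) * (\<Prod>j\<in>{1..n}. ennreal (hx t (y j)))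
            = ennreal (c i) * (\<Prod>j\<in>{1..n}. ennreal (G (i j) (FX (y j))) * ennreal (hx t (y j)))"
          if i: "i \<in> bern_vectors n" for i
        proof -
          have "ennreal (c i * (\<Prod>j=1..n. G (i j) (FX (y j)))) = ennreal (c i) * (\<Prod>j=1..n. ennreal (G (i j) (FX (y j))))"
            using c_nn[OF i] G_nn by (simp add: ennreal_mult prod_nonneg prod_ennreal)
          then show ?thesis by (simp add: prod.distrib mult.assoc)
        qed
        show "emeasure M {\<omega>\<in>A. \<forall>j\<in>{1..n}. X j \<omega> \<le> y j} * (\<Prod>j\<in>{1..n}. ennreal (hx t (y j)))
          = (\<Sum>i\<in>bern_vectors n. ennreal (c i) * (\<Prod>j\<in>{1..n}. ennreal (G (i j) (FX (y j))) * ennreal (hx t (y j))))"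
          unfolding e1 sum_distrib_right using e2 by (intro sum.cong) auto
      qed
      also have "\<dots> = (\<Sum>i\<in>bern_vectors n. ennreal (c i) * (\<Prod>j\<in>{1..n}. ennreal (LST_ord2 \<mu>X (i j) t)))"
      proof -
        interpret PL: product_sigma_finite "\<lambda>_::nat. lborel" by standard
        have "(\<integral>\<^sup>+y. (\<Sum>i\<in>bern_vectors n. ennreal (c i) *
             (\<Prod>j\<in>{1..n}. ennreal (G (i j) (FX (y j))) * ennreal (hx t (y j)))) \<partial>PiM {1..n} (\<lambda>_. lborel))
          = (\<Sum>i\<in>bern_vectors n. \<integral>\<^sup>+y. ennreal (c i) *
             (\<Prod>j\<in>{1..n}. ennreal (G (i j) (FX (y j))) * ennreal (hx t (y j))) \<partial>PiM {1..n} (\<lambda>_. lborel))"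
          by (rule nn_integral_sum) measurable
        also have "\<dots> = (\<Sum>i\<in>bern_vectors n. ennreal (c i) * \<integral>\<^sup>+y.
             (\<Prod>j\<in>{1..n}. ennreal (G (i j) (FX (y j))) * ennreal (hx t (y j))) \<partial>PiM {1..n} (\<lambda>_. lborel))"
          by (intro sum.cong refl nn_integral_cmult) measurable
        also have "\<dots> = (\<Sum>i\<in>bern_vectors n. ennreal (c i) * (\<Prod>j\<in>{1..n}. \<integral>\<^sup>+y.
             ennreal (G (i j) (FX y)) * ennreal (hx t y) \<partial>lborel))"
          by (intro sum.cong refl arg_cong2[where f="(*)"] PL.product_nn_integral_prod) auto
        finally show ?thesis by (simp add: LSTeq)
      qed
      also have "\<dots> = ennreal r"
      proof -
        have "(\<Sum>i\<in>bern_vectors n. ennreal (c i) * (\<Prod>j\<in>{1..n}. ennreal (LST_ord2 \<mu>X (i j) t)))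
            = (\<Sum>i\<in>bern_vectors n. ennreal (c i * (\<Prod>j\<in>{1..n}. LST_ord2 \<mu>X (i j) t)))"
          using c_nn LST_nn by (intro sum.cong refl) (simp add: ennreal_mult prod_nonneg prod_ennreal)
        also have "\<dots> = ennreal (\<Sum>i\<in>bern_vectors n. c i * (\<Prod>j\<in>{1..n}. LST_ord2 \<mu>X (i j) t))"
          by (rule sum_ennreal) (use c_nn LST_nn in \<open>auto intro!: mult_nonneg_nonneg prod_nonneg\<close>)
        also have "(\<Sum>i\<in>bern_vectors n. c i * (\<Prod>j\<in>{1..n}. LST_ord2 \<mu>X (i j) t)) = r"
          unfolding r_def fgm_expect_def c_def by (simp add: mult.assoc)
        finally show ?thesis .
      qed
      finally show ?thesis .
    qed
    show ?thesis using main r_nn ls unfolding A_def r_def \<mu>N_def \<mu>X_def by simp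
  qed
qed

theorem mainTheorem12:
  fixes M :: "'a measure" and N :: "'a \<Rightarrow> nat" and X :: "nat \<Rightarrow> 'a \<Rightarrow> real"
    and \<theta> :: "nat set \<Rightarrow> real" and t :: real
  assumes P: "prob_space M"
    and N_meas: "N \<in> measurable M (count_space UNIV)"
    and X_meas: "\<And>j. 1 \<le> j \<Longrightarrow> X j \<in> borel_measurable M"
    and X_pos: "\<And>j. 1 \<le> j \<Longrightarrow> AE \<omega> in M. 0 < X j \<omega>"
    and X_ident: "\<And>j. 1 \<le> j \<Longrightarrow> distr M borel (X j) = distr M borel (X 1)"
    and adm: "\<And>k. 1 \<le> k \<Longrightarrow> le_sup_support M N k \<Longrightarrow> fgm_admissible \<theta> k"
    and copula: "\<And>k n x. 1 \<le> k \<Longrightarrow> le_sup_support M N k \<Longrightarrow>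
        measure M {\<omega>\<in>space M. N \<omega> \<le> n \<and> (\<forall>j\<in>{1..k}. X j \<omega> \<le> x j)}
        = fgm_copula \<theta> k (\<lambda>m. if m = 0 then measure M {\<omega>\<in>space M. N \<omega> \<le> n}
                                else measure M {\<omega>\<in>space M. X 1 \<omega> \<le> x m})"
    and exch: "\<And>k \<pi>. 1 \<le> k \<Longrightarrow> le_sup_support M N k \<Longrightarrow> \<pi> permutes {1..k} \<Longrightarrow>
        distr M (count_space UNIV \<Otimes>\<^sub>M PiM {1..k} (\<lambda>_. borel))
          (\<lambda>\<omega>. (N \<omega>, \<lambda>j\<in>{1..k}. X (\<pi> j) \<omega>))
        = distr M (count_space UNIV \<Otimes>\<^sub>M PiM {1..k} (\<lambda>_. borel))
          (\<lambda>\<omega>. (N \<omega>, \<lambda>j\<in>{1..k}. X j \<omega>))"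
    and t: "0 \<le> t"
  shows "(\<integral>\<omega>. exp (- t * aggregate N X \<omega>) \<partial>M)
         = measure M {\<omega>\<in>space M. N \<omega> = 0}
           + (\<Sum>n. if 1 \<le> n \<and> le_sup_support M N n then
                fgm_expect \<theta> n (\<lambda>i. pmf_ord2 (distr M (count_space UNIV) N) (i 0) n
                   * (\<Prod>j=1..n. LST_ord2 (distr M borel (X 1)) (i j) t))
              else 0)
       \<and> measure M {\<omega>\<in>space M. N \<omega> = 0}
           + (\<Sum>n. if 1 \<le> n \<and> le_sup_support M N n then
                fgm_expect \<theta> n (\<lambda>i. pmf_ord2 (distr M (count_space UNIV) N) (i 0) n
                   * (\<Prod>j=1..n. LST_ord2 (distr M borel (X 1)) (i j) t))
              else 0)
         = measure M {\<omega>\<in>space M. N \<omega> = 0}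
           + (\<Sum>a\<in>{0,1::nat}. \<Sum>n. if 1 \<le> n \<and> le_sup_support M N n then
                pmf_ord2 (distr M (count_space UNIV) N) a n
                * (\<Sum>k=0..n. prob_I0_K \<theta> n a k
                     * LST_ord2 (distr M borel (X 1)) 0 t ^ (n - k)
                     * LST_ord2 (distr M borel (X 1)) 1 t ^ k)
              else 0)"
proof -
  interpret prob_space M by (rule P)
  note N_meas[measurable]
  define r where "r n = (if 1 \<le> n \<and> le_sup_support M N n then
                fgm_expect \<theta> n (\<lambda>i. pmf_ord2 (distr M (count_space UNIV) N) (i 0) n
                   * (\<Prod>j=1..n. LST_ord2 (distr M borel (X 1)) (i j) t))
              else 0)" for n
  define q where "q a n = (if 1 \<le> n \<and> le_sup_support M N n then
                pmf_ord2 (distr M (count_space UNIV) N) a n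
                * (\<Sum>k=0..n. prob_I0_K \<theta> n a k
                     * LST_ord2 (distr M borel (X 1)) 0 t ^ (n - k)
                     * LST_ord2 (distr M borel (X 1)) 1 t ^ k)
              else 0)" for a n
  define P0 where "P0 = measure M {\<omega>\<in>space M. N \<omega> = 0}"
  define g where "g n \<omega> = indicator {\<omega>\<in>space M. N \<omega> = n} \<omega> * (\<Prod>j\<in>{1..n}. ennreal (exp (- t * X j \<omega>)))" for n \<omega>
  have r_nn: "0 \<le> r n" for n
  proof (cases "1 \<le> n")
    case True
    note pn = per_n[of M N X \<theta> t n, OF P N_meas X_meas X_pos adm copula t True]
    have eq: "r n = (if le_sup_support M N n then fgm_expect \<theta> n (\<lambda>i. pmf_ord2 (distr M (count_space UNIV) N) (i 0) n
                   * (\<Prod>j=1..n. LST_ord2 (distr M borel (X 1)) (i j) t)) else 0)"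
      unfolding r_def using True by simp
    show ?thesis by (subst eq) (rule conjunct2[OF pn])
  qed (simp add: r_def)
  have gE: "(\<integral>\<^sup>+\<omega>. g n \<omega> \<partial>M) = ennreal (if n = 0 then P0 else 0) + ennreal (r n)" for n
  proof (cases "n = 0")
    case True
    have "(\<integral>\<^sup>+\<omega>. g n \<omega> \<partial>M) = emeasure M {\<omega>\<in>space M. N \<omega> = 0}"
      using True by (simp add: g_def)
    then show ?thesis using True by (simp add: r_def P0_def emeasure_eq_measure)
  next
    case False
    then have n: "1 \<le> n" by simp
    note pn = per_n[of M N X \<theta> t n, OF P N_meas X_meas X_pos adm copula t n]
    have eq: "r n = (if le_sup_support M N n then fgm_expect \<theta> n (\<lambda>i. pmf_ord2 (distr M (count_space UNIV) N) (i 0) n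
                   * (\<Prod>j=1..n. LST_ord2 (distr M borel (X 1)) (i j) t)) else 0)"
      unfolding r_def using n by simp
    have "(\<integral>\<^sup>+\<omega>. g n \<omega> \<partial>M) = ennreal (r n)"
      unfolding g_def by (subst eq) (rule conjunct1[OF pn])
    then show ?thesis using False by simp
  qed
  have g_meas: "g n \<in> borel_measurable M" for n
  proof -
    have Xm: "X j \<in> borel_measurable M" if "j \<in> {1..n}" for j using X_meas that by auto
    show ?thesis unfolding g_def using Xm by measurable
  qed
  have Xs_meas: "(\<lambda>\<omega>. \<Sum>j=1..n. X j \<omega>) \<in> borel_measurable M" for n
    by (rule borel_measurable_sum) (use X_meas in auto)
  have agg_meas: "aggregate N X \<in> borel_measurable M"
  proof -
    have "(\<lambda>\<omega>. (\<lambda>n \<omega>. \<Sum>j=1..n. X j \<omega>) (N \<omega>) \<omega>) \<in> borel_measurable M"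
      by (rule measurable_compose_countable[OF Xs_meas N_meas])
    then show ?thesis by (simp add: aggregate_def[abs_def])
  qed
  have pw: "ennreal (exp (- t * aggregate N X \<omega>)) = (\<Sum>n. g n \<omega>)" if \<omega>: "\<omega> \<in> space M" for \<omega>
  proof -
    have ex: "(\<lambda>n. g n \<omega>) = (\<lambda>n. if n = N \<omega> then g n \<omega> else 0)"
      by (rule ext) (use \<omega> in \<open>simp add: g_def\<close>)
    have "(\<Sum>n. g n \<omega>) = g (N \<omega>) \<omega>"
      unfolding ex by (rule sums_unique[OF sums_single, symmetric])
    also have "\<dots> = (\<Prod>j\<in>{1..N \<omega>}. ennreal (exp (- t * X j \<omega>)))" using \<omega> by (simp add: g_def)
    also have "\<dots> = ennreal (\<Prod>j\<in>{1..N \<omega>}. exp (- t * X j \<omega>))" by (simp add: prod_ennreal)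
    also have "(\<Prod>j\<in>{1..N \<omega>}. exp (- t * X j \<omega>)) = exp (- t * aggregate N X \<omega>)"
      by (simp add: aggregate_def exp_sum sum_distrib_left)
    finally show ?thesis by simp
  qed
  have int_eq: "(\<integral>\<^sup>+\<omega>. ennreal (exp (- t * aggregate N X \<omega>)) \<partial>M) = (\<Sum>n. \<integral>\<^sup>+\<omega>. g n \<omega> \<partial>M)"
  proof -
    have "(\<integral>\<^sup>+\<omega>. ennreal (exp (- t * aggregate N X \<omega>)) \<partial>M) = (\<integral>\<^sup>+\<omega>. (\<Sum>n. g n \<omega>) \<partial>M)"
      by (rule nn_integral_cong) (rule pw)
    also have "\<dots> = (\<Sum>n. \<integral>\<^sup>+\<omega>. g n \<omega> \<partial>M)" by (rule nn_integral_suminf) (rule g_meas)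
    finally show ?thesis .
  qed
  have le1: "(\<integral>\<^sup>+\<omega>. ennreal (exp (- t * aggregate N X \<omega>)) \<partial>M) \<le> 1"
  proof -
    have "AE \<omega> in M. \<forall>j. 1 \<le> j \<longrightarrow> 0 < X j \<omega>"
      unfolding AE_all_countable using X_pos by (auto elim!: eventually_mono)
    then have "AE \<omega> in M. ennreal (exp (- t * aggregate N X \<omega>)) \<le> 1"
    proof (rule eventually_mono)
      fix \<omega> assume "\<forall>j. 1 \<le> j \<longrightarrow> 0 < X j \<omega>"
      then have "0 \<le> aggregate N X \<omega>" unfolding aggregate_def
        by (intro sum_nonneg) (auto intro: less_imp_le)
      then show "ennreal (exp (- t * aggregate N X \<omega>)) \<le> 1" using t
        by (simp add: mult_nonneg_nonneg)
    qed
    then have "(\<integral>\<^sup>+\<omega>. ennreal (exp (- t * aggregate N X \<omega>)) \<partial>M) \<le> (\<integral>\<^sup>+\<omega>. 1 \<partial>M)"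
      by (rule nn_integral_mono_AE)
    then show ?thesis by (simp add: emeasure_space_1)
  qed
  have sumA: "(\<Sum>n. ennreal (if n = 0 then P0 else 0)) = ennreal P0"
  proof -
    have e: "(\<lambda>n. ennreal (if n = 0 then P0 else 0)) = (\<lambda>n. if n = 0 then ennreal P0 else 0)" by auto
    show ?thesis unfolding e using sums_unique[OF sums_single[of 0 "\<lambda>_. ennreal P0"]] by simp
  qed
  have tot: "(\<integral>\<^sup>+\<omega>. ennreal (exp (- t * aggregate N X \<omega>)) \<partial>M) = ennreal P0 + (\<Sum>n. ennreal (r n))"
    unfolding int_eq gE by (subst suminf_add[symmetric]) (auto simp: sumA)
  have "(\<Sum>n. ennreal (r n)) \<noteq> \<top>"
  proof
    assume "(\<Sum>n. ennreal (r n)) = \<top>"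
    then have "(\<integral>\<^sup>+\<omega>. ennreal (exp (- t * aggregate N X \<omega>)) \<partial>M) = \<top>" unfolding tot by simp
    with le1 show False by (simp add: top_unique)
  qed
  then have sr: "summable r" by (rule summable_suminf_not_top[OF r_nn])
  have sr2: "(\<Sum>n. ennreal (r n)) = ennreal (\<Sum>n. r n)" by (rule suminf_ennreal2[OF r_nn sr])
  have P0nn: "0 \<le> P0" by (simp add: P0_def)
  have sumr_nn: "0 \<le> (\<Sum>n. r n)" by (rule suminf_nonneg[OF sr r_nn])
  have conj1: "(\<integral>\<omega>. exp (- t * aggregate N X \<omega>) \<partial>M) = P0 + (\<Sum>n. r n)"
  proof -
    have "(\<integral>\<omega>. exp (- t * aggregate N X \<omega>) \<partial>M) = enn2real (\<integral>\<^sup>+\<omega>. ennreal (exp (- t * aggregate N X \<omega>)) \<partial>M)"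
      by (rule integral_eq_nn_integral) (use agg_meas in auto)
    also have "\<dots> = P0 + (\<Sum>n. r n)" unfolding tot sr2
      using P0nn sumr_nn by (simp add: ennreal_plus[symmetric] del: ennreal_plus)
    finally show ?thesis .
  qed
  have LST_nn: "0 \<le> LST_ord2 (distr M borel (X 1)) a t" for a
    unfolding LST_ord2_def by (rule integral_nonneg_AE) simp
  have q_nn: "0 \<le> q a n" for a n
  proof (cases "1 \<le> n \<and> le_sup_support M N n")
    case True
    have ad: "fgm_admissible \<theta> n" using adm[of n] True by simp
    have "0 \<le> prob_I0_K \<theta> n a k" for k
      unfolding prob_I0_K_def using fgm_pmf_nonneg[OF ad] by (intro sum_nonneg) auto
    then show ?thesis using True LST_nn unfolding q_def
      by (auto simp: pmf_ord2_def intro!: mult_nonneg_nonneg sum_nonneg)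
  qed (auto simp: q_def)
  have rq: "r n = (\<Sum>a\<in>{0,1::nat}. q a n)" for n
    unfolding r_def q_def using regroup[of \<theta> n "\<lambda>a. pmf_ord2 (distr M (count_space UNIV) N) a n"
        "\<lambda>a. LST_ord2 (distr M borel (X 1)) a t"] by simp
  have sq: "summable (q a)" if "a \<in> {0,1}" for a
  proof (rule summable_comparison_test'[OF sr])
    fix n :: nat
    have "q a n \<le> (\<Sum>a\<in>{0,1::nat}. q a n)" using that q_nn
      by (auto simp: add_increasing add_increasing2)
    then show "norm (q a n) \<le> r n" using q_nn[of a n] rq[of n] by simp
  qed
  have conj2: "(\<Sum>n. r n) = (\<Sum>a\<in>{0,1::nat}. \<Sum>n. q a n)"
    unfolding rq by (rule suminf_sum) (rule sq)
  show ?thesis using conj1 conj2 unfolding r_def q_def P0_def by simp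
qed

end
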